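(* Let $(E,d)$ be a Polish space and $\mu\in(0,1)$. For any $f\in D^{\mu}([0,1],E)$, \[ \tfrac12[f]_{\sim\mu}\le[f]_{\mu}\le 2[f]_{\sim\mu}. \]
   Context: $D([0,1],E)$ is the space of càdlàg $E$-valued functions on $[0,1]$. For $0\le s\le t\le u\le 1$, $\Delta(f;s,t,u)=d(f(s),f(t))\wedge d(f(t),f(u))$, and $[f]_\mu=\sup_{0\le s\le t\le u\le 1}\frac{\Delta(f;s,t,u)}{|u-s|^\mu}$. $D^{\mu}([0,1],E)$ is the set of $f\in D([0,1],E)$ with $[f]_\mu+\sup_{t\in(0,1]}\frac{d(f(0),f(t))}{t^\mu}+\sup_{t\in[0,1)}\frac{d(f(1),f(t))}{|1-t|^\mu}<\infty$. For $0\le\sigma<\tau\le1$, $N(f;(\sigma,\tau))=\inf_{\sigma<\theta\le\tau}\sup_{s\in[\sigma,\theta),\,u\in[\theta,\tau]}\left[d(f(\sigma),f(s))\vee d(f(u),f(\tau))\right]$; for $\eta>0$, $N(f;\eta)=\sup_{0\le\sigma<\tau\le 1,\ \tau-\sigma\le\eta}N(f;(\sigma,\tau))$; and $[f]_{\sim\mu}=\sup_{\eta>0}\frac{N(f;\eta)}{\eta^\mu}$. *)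

theory Defs
  imports "HOL-Analysis.Analysis"
begin

text \<open>Functions on [0,1] are represented as total functions real => E; only values on [0,1] matter.
  The metric d is the metric dist of the type class polish_space.\<close>

definition cadlag01 :: "(real \<Rightarrow> 'a::metric_space) \<Rightarrow> bool" where
  "cadlag01 f \<longleftrightarrow>
     (\<forall>t\<in>{0..<1}. continuous (at_right t) f) \<and>
     (\<forall>t\<in>{0<..1}. \<exists>l. (f \<longlongrightarrow> l) (at_left t))"

definition Delta3 :: "(real \<Rightarrow> 'a::metric_space) \<Rightarrow> real \<Rightarrow> real \<Rightarrow> real \<Rightarrow> real" where
  "Delta3 f s t u = min (dist (f s) (f t)) (dist (f t) (f u))"

text \<open>[f]_mu (for s = u the quotient is 0 = Delta, harmless).\<close>
definition holder_semi :: "real \<Rightarrow> (real \<Rightarrow> 'a::metric_space) \<Rightarrow> ereal" where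
  "holder_semi mu f = (SUP (s,t,u)\<in>{(s,t,u). 0 \<le> s \<and> s \<le> t \<and> t \<le> u \<and> u \<le> 1}.
       ereal (Delta3 f s t u / \<bar>u - s\<bar> powr mu))"

definition Dmu :: "real \<Rightarrow> (real \<Rightarrow> 'a::metric_space) set" where
  "Dmu mu = {f. cadlag01 f \<and>
      holder_semi mu f
      + (SUP t\<in>{0<..1}. ereal (dist (f 0) (f t) / t powr mu))
      + (SUP t\<in>{0..<1}. ereal (dist (f 1) (f t) / \<bar>1 - t\<bar> powr mu)) < \<infinity>}"

definition Nint :: "(real \<Rightarrow> 'a::metric_space) \<Rightarrow> real \<Rightarrow> real \<Rightarrow> ereal" where
  "Nint f \<sigma> \<tau> = (INF \<theta>\<in>{\<sigma><..\<tau>}.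
      SUP (s,u)\<in>{\<sigma>..<\<theta>} \<times> {\<theta>..\<tau>}. ereal (max (dist (f \<sigma>) (f s)) (dist (f u) (f \<tau>))))"

definition Neta :: "(real \<Rightarrow> 'a::metric_space) \<Rightarrow> real \<Rightarrow> ereal" where
  "Neta f \<eta> = (SUP (\<sigma>,\<tau>)\<in>{(\<sigma>,\<tau>). 0 \<le> \<sigma> \<and> \<sigma> < \<tau> \<and> \<tau> \<le> 1 \<and> \<tau> - \<sigma> \<le> \<eta>}. Nint f \<sigma> \<tau>)"

definition tilde_semi :: "real \<Rightarrow> (real \<Rightarrow> 'a::metric_space) \<Rightarrow> ereal" where
  "tilde_semi mu f = (SUP \<eta>\<in>{0<..}. Neta f \<eta> / ereal (\<eta> powr mu))"

end

theory Submission
  imports Defs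
begin

lemma rc:
  assumes "cadlag01 f" "0 \<le> x" "x < 1" "e > 0"
  shows "\<exists>b>x. \<forall>y. x < y \<and> y < b \<longrightarrow> dist (f y) (f x) < e"
proof -
  have "continuous (at_right x) f" using assms unfolding cadlag01_def by auto
  hence "(f \<longlongrightarrow> f x) (at_right x)"
    by (simp add: continuous_within)
  hence "eventually (\<lambda>y. dist (f y) (f x) < e) (at_right x)"
    using assms(4) by (rule tendstoD)
  thus ?thesis unfolding eventually_at_right_field by blast
qed

lemma SUP_pair_le:
  fixes g :: "'b \<Rightarrow> 'c \<Rightarrow> ereal"
  assumes "\<And>s u. s \<in> A \<Longrightarrow> u \<in> B \<Longrightarrow> g s u \<le> c"
  shows "(SUP (s,u)\<in>A \<times> B. g s u) \<le> c"
  using assms by (auto intro!: SUP_least)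

lemma Nint_le_eps:
  fixes f :: "real \<Rightarrow> 'a::metric_space"
  assumes cad: "cadlag01 f" and s0: "0 \<le> \<sigma>" and st: "\<sigma> < \<tau>" and t1: "\<tau> \<le> 1"
    and L0: "0 \<le> L" and e0: "0 < e"
    and D: "\<And>s t u. \<sigma> \<le> s \<Longrightarrow> s \<le> t \<Longrightarrow> t \<le> u \<Longrightarrow> u \<le> \<tau> \<Longrightarrow> Delta3 f s t u \<le> L"
  shows "Nint f \<sigma> \<tau> \<le> ereal (2*L + e)"
proof -
  define L' where "L' = L + e"
  define S where "S = {t\<in>{\<sigma><..\<tau>}. dist (f \<sigma>) (f t) > L'}"
  have L'pos: "L' > 0" using L0 e0 by (simp add: L'_def)
  show ?thesis
  proof (cases "S = {}")
    case True
    show ?thesis unfolding Nint_def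
    proof (rule INF_lower2[of \<tau>])
      show "\<tau> \<in> {\<sigma><..\<tau>}" using st by auto
      show "(SUP (s,u)\<in>{\<sigma>..<\<tau>} \<times> {\<tau>..\<tau>}. ereal (max (dist (f \<sigma>) (f s)) (dist (f u) (f \<tau>))))
            \<le> ereal (2*L + e)"
      proof (rule SUP_pair_le)
        fix s u assume s: "s \<in> {\<sigma>..<\<tau>}" and u: "u \<in> {\<tau>..\<tau>}"
        have "dist (f \<sigma>) (f s) \<le> L'"
        proof (cases "s = \<sigma>")
          case True thus ?thesis using L'pos by simp
        next
          case False
          hence "s \<in> {\<sigma><..\<tau>}" using s by auto
          thus ?thesis using \<open>S = {}\<close> unfolding S_def by force
        qed
        moreover have "u = \<tau>" using u by auto
        ultimately show "ereal (max (dist (f \<sigma>) (f s)) (dist (f u) (f \<tau>))) \<le> ereal (2*L + e)"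
          using L0 by (simp add: L'_def)
      qed
    qed
  next
    case False
    define \<theta> where "\<theta> = Inf S"
    have bdd: "bdd_below S" unfolding S_def by (rule bdd_belowI[of _ \<sigma>]) auto
    have lowerS: "\<theta> \<le> t" if "t \<in> S" for t using cInf_lower[OF that bdd] by (simp add: \<theta>_def)
    have Sle: "t \<le> \<tau>" if "t \<in> S" for t using that by (auto simp: S_def)
    obtain t0 where t0: "t0 \<in> S" using False by auto
    have th_le: "\<theta> \<le> \<tau>" using lowerS[OF t0] Sle[OF t0] by simp
    obtain b where b: "b > \<sigma>" "\<forall>y. \<sigma> < y \<and> y < b \<longrightarrow> dist (f y) (f \<sigma>) < L'"
      using rc[OF cad s0 _ L'pos] st t1 by auto
    have "b \<le> t" if "t \<in> S" for t
    proof (rule ccontr)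
      assume "\<not> b \<le> t"
      hence "dist (f t) (f \<sigma>) < L'" using b that by (auto simp: S_def)
      thus False using that by (auto simp: S_def dist_commute)
    qed
    hence "b \<le> \<theta>" unfolding \<theta>_def using False by (intro cInf_greatest) auto
    hence th_gt: "\<sigma> < \<theta>" using b by simp
    have inS: "dist (f t) (f u) \<le> L" if "t \<in> S" "t \<le> u" "u \<le> \<tau>" for t u
    proof -
      have "Delta3 f \<sigma> t u \<le> L" using that by (intro D) (auto simp: S_def)
      moreover have "dist (f \<sigma>) (f t) > L" using that L'pos e0 by (auto simp: S_def L'_def)
      ultimately show ?thesis by (auto simp: Delta3_def)
    qed
    have uB: "dist (f u) (f \<tau>) \<le> 2*L" if u: "\<theta> \<le> u" "u \<le> \<tau>" for u
    proof (cases "\<exists>t\<in>S. t \<le> u")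
      case True
      then obtain t where t: "t \<in> S" "t \<le> u" by auto
      have "dist (f u) (f \<tau>) \<le> dist (f t) (f u) + dist (f t) (f \<tau>)"
        by (metis dist_commute dist_triangle)
      also have "\<dots> \<le> L + L" using inS[OF t u(2)] inS[OF t(1) _ order_refl] t u by auto
      finally show ?thesis by simp
    next
      case nt: False
      show ?thesis
      proof (cases "u = \<tau>")
        case True thus ?thesis using L0 by simp
      next
        case ne: False
        have "u = \<theta>"
        proof (rule ccontr)
          assume "u \<noteq> \<theta>"
          hence "\<theta> < u" using u by simp
          then obtain t where "t \<in> S" "t < u" using cInf_lessD[of S u] False by (auto simp: \<theta>_def)
          thus False using nt by auto
        qed
        show ?thesis
        proof (rule ccontr)
          assume c: "\<not> ?thesis"
          define e2 where "e2 = dist (f \<theta>) (f \<tau>) - L"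
          have e2: "e2 > 0" unfolding e2_def using c \<open>u = \<theta>\<close> L0 by simp
          obtain b2 where b2: "b2 > \<theta>" "\<forall>y. \<theta> < y \<and> y < b2 \<longrightarrow> dist (f y) (f \<theta>) < e2"
            using rc[OF cad _ _ e2, of \<theta>] th_gt s0 ne u t1 \<open>u = \<theta>\<close> by fastforce
          have "\<theta> \<notin> S" using nt \<open>u = \<theta>\<close> by auto
          obtain t where t: "t \<in> S" "t < b2" using cInf_lessD[of S b2] False b2(1) by (auto simp: \<theta>_def)
          have "\<theta> < t" using lowerS[OF t(1)] t \<open>\<theta> \<notin> S\<close> by (cases "\<theta> = t") auto
          hence "dist (f t) (f \<theta>) < e2" using b2 t by auto
          moreover have "dist (f t) (f \<tau>) \<le> L" using inS[OF t(1) _ order_refl] Sle[OF t(1)] by auto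
          moreover have "dist (f \<theta>) (f \<tau>) \<le> dist (f t) (f \<theta>) + dist (f t) (f \<tau>)"
            by (metis dist_commute dist_triangle)
          ultimately show False unfolding e2_def by simp
        qed
      qed
    qed
    show ?thesis unfolding Nint_def
    proof (rule INF_lower2[of \<theta>])
      show "\<theta> \<in> {\<sigma><..\<tau>}" using th_gt th_le by auto
      show "(SUP (s,u)\<in>{\<sigma>..<\<theta>} \<times> {\<theta>..\<tau>}. ereal (max (dist (f \<sigma>) (f s)) (dist (f u) (f \<tau>))))
            \<le> ereal (2*L + e)"
      proof (rule SUP_pair_le)
        fix s u assume s: "s \<in> {\<sigma>..<\<theta>}" and u: "u \<in> {\<theta>..\<tau>}"
        have "dist (f \<sigma>) (f s) \<le> L'"
        proof (cases "s = \<sigma>")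
          case True thus ?thesis using L'pos by simp
        next
          case False
          hence "s \<in> {\<sigma><..\<tau>}" using s th_le by auto
          moreover have "s \<notin> S" using lowerS s by force
          ultimately show ?thesis unfolding S_def by force
        qed
        moreover have "dist (f u) (f \<tau>) \<le> 2*L" using uB u by auto
        ultimately show "ereal (max (dist (f \<sigma>) (f s)) (dist (f u) (f \<tau>))) \<le> ereal (2*L + e)"
          using L0 e0 by (simp add: L'_def)
      qed
    qed
  qed
qed

lemma Nint_le:
  fixes f :: "real \<Rightarrow> 'a::metric_space"
  assumes cad: "cadlag01 f" and s0: "0 \<le> \<sigma>" and st: "\<sigma> < \<tau>" and t1: "\<tau> \<le> 1"
    and L0: "0 \<le> L"
    and D: "\<And>s t u. \<sigma> \<le> s \<Longrightarrow> s \<le> t \<Longrightarrow> t \<le> u \<Longrightarrow> u \<le> \<tau> \<Longrightarrow> Delta3 f s t u \<le> L"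
  shows "Nint f \<sigma> \<tau> \<le> ereal (2*L)"
proof (rule ereal_le_epsilon2)
  fix e :: real assume "0 < e"
  from Nint_le_eps[OF cad s0 st t1 L0 this D] show "Nint f \<sigma> \<tau> \<le> ereal (2*L) + ereal e" by simp
qed

lemma Delta_le_Nint:
  assumes "s \<le> t" "t \<le> u" "s < u"
  shows "ereal (Delta3 f s t u) \<le> Nint f s u"
  unfolding Nint_def
proof (rule INF_greatest)
  fix \<theta> assume th: "\<theta> \<in> {s<..u}"
  show "ereal (Delta3 f s t u) \<le> (SUP (s',u')\<in>{s..<\<theta>} \<times> {\<theta>..u}. ereal (max (dist (f s) (f s')) (dist (f u') (f u))))"
  proof (cases "t < \<theta>")
    case True
    show ?thesis
      by (rule SUP_upper2[where i="(t,u)"]) (use True th assms in \<open>auto simp: Delta3_def\<close>)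
  next
    case False
    show ?thesis
      by (rule SUP_upper2[where i="(s,t)"]) (use False th assms in \<open>auto simp: Delta3_def\<close>)
  qed
qed

lemma holder_le_tilde_pt:
  assumes "0 < mu" "0 \<le> s" "s \<le> t" "t \<le> u" "u \<le> 1" "s < u"
  shows "ereal (Delta3 f s t u / \<bar>u - s\<bar> powr mu) \<le> tilde_semi mu f"
proof -
  have p: "(u - s) powr mu > 0" using assms by simp
  have "ereal (Delta3 f s t u) \<le> Neta f (u - s)"
    unfolding Neta_def
    by (rule order_trans[OF Delta_le_Nint[OF assms(3,4,6)]], rule SUP_upper2[where i="(s,u)"])
       (use assms in auto)
  hence "ereal (Delta3 f s t u) / ereal ((u - s) powr mu) \<le> Neta f (u - s) / ereal ((u - s) powr mu)"
    using p by (intro ereal_divide_right_mono) auto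
  also have "\<dots> \<le> tilde_semi mu f" unfolding tilde_semi_def
    by (rule SUP_upper2[where i="u - s"]) (use assms in auto)
  finally show ?thesis using p assms by simp
qed

lemma holder_nonneg: "0 \<le> holder_semi mu f"
  unfolding holder_semi_def
  by (rule SUP_upper2[where i="(0,0,0)"]) (auto simp: Delta3_def)

theorem lemma1:
  fixes f :: "real \<Rightarrow> 'a::polish_space" and mu :: real
  assumes "0 < mu" and "mu < 1" and "f \<in> Dmu mu"
  shows "ereal (1/2) * tilde_semi mu f \<le> holder_semi mu f \<and>
         holder_semi mu f \<le> 2 * tilde_semi mu f"
proof -
  have cad: "cadlag01 f" using assms(3) by (simp add: Dmu_def)
  have b1: "0 \<le> (SUP t\<in>{0<..1}. ereal (dist (f 0) (f t) / t powr mu))"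
    by (rule SUP_upper2[where i=1]) auto
  have b2: "0 \<le> (SUP t\<in>{0..<1}. ereal (dist (f 1) (f t) / \<bar>1 - t\<bar> powr mu))"
    by (rule SUP_upper2[where i=0]) auto
  have "holder_semi mu f < \<infinity>"
  proof (rule ccontr)
    assume "\<not> holder_semi mu f < \<infinity>"
    hence "holder_semi mu f = \<infinity>" by simp
    thus False using assms(3) b1 b2 by (simp add: Dmu_def)
  qed
  then obtain H where H: "holder_semi mu f = ereal H" using holder_nonneg[of mu f]
    by (cases "holder_semi mu f") auto
  have H0: "0 \<le> H" using holder_nonneg[of mu f] H by simp
  have A: "Delta3 f s t u \<le> H * (u - s) powr mu"
    if "0 \<le> s" "s \<le> t" "t \<le> u" "u \<le> 1" for s t u
  proof (cases "s = u")
    case True thus ?thesis using that by (simp add: Delta3_def)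
  next
    case False
    have p: "(u - s) powr mu > 0" using that False by simp
    have "ereal (Delta3 f s t u / \<bar>u - s\<bar> powr mu) \<le> holder_semi mu f"
      unfolding holder_semi_def by (rule SUP_upper2[where i="(s,t,u)"]) (use that in auto)
    hence "Delta3 f s t u / (u - s) powr mu \<le> H" using H that by simp
    thus ?thesis using p by (simp add: divide_le_eq mult.commute)
  qed
  have T: "tilde_semi mu f \<le> ereal (2*H)"
    unfolding tilde_semi_def
  proof (rule SUP_least)
    fix \<eta> :: real assume eta: "\<eta> \<in> {0<..}"
    have pe: "\<eta> powr mu > 0" using eta by simp
    have "Neta f \<eta> \<le> ereal (2 * H * \<eta> powr mu)"
      unfolding Neta_def
    proof (rule SUP_least, clarify)
      fix \<sigma> \<tau> :: real assume st: "0 \<le> \<sigma>" "\<sigma> < \<tau>" "\<tau> \<le> 1" "\<tau> - \<sigma> \<le> \<eta>"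
      have "Nint f \<sigma> \<tau> \<le> ereal (2 * (H * (\<tau> - \<sigma>) powr mu))"
      proof (rule Nint_le[OF cad st(1,2,3)])
        show "0 \<le> H * (\<tau> - \<sigma>) powr mu" using H0 by simp
        fix s t u assume "\<sigma> \<le> s" "s \<le> t" "t \<le> u" "u \<le> \<tau>"
        hence "Delta3 f s t u \<le> H * (u - s) powr mu" using A st by simp
        also have "\<dots> \<le> H * (\<tau> - \<sigma>) powr mu"
          using H0 \<open>\<sigma> \<le> s\<close> \<open>u \<le> \<tau>\<close> \<open>s \<le> t\<close> \<open>t \<le> u\<close> assms(1)
          by (intro mult_left_mono powr_mono2) auto
        finally show "Delta3 f s t u \<le> H * (\<tau> - \<sigma>) powr mu" .
      qed
      also have "\<dots> \<le> ereal (2 * H * \<eta> powr mu)"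
        using H0 st assms(1) by (simp add: powr_mono2 mult_left_mono)
      finally show "Nint f \<sigma> \<tau> \<le> ereal (2 * H * \<eta> powr mu)" .
    qed
    hence "Neta f \<eta> / ereal (\<eta> powr mu) \<le> ereal (2 * H * \<eta> powr mu) / ereal (\<eta> powr mu)"
      using pe by (intro ereal_divide_right_mono) auto
    also have "\<dots> = ereal (2*H)" using pe by simp
    finally show "Neta f \<eta> / ereal (\<eta> powr mu) \<le> ereal (2*H)" .
  qed
  have z: "ereal (Delta3 f 0 0 1 / \<bar>1 - 0\<bar> powr mu) \<le> tilde_semi mu f"
    by (rule holder_le_tilde_pt) (use assms in auto)
  hence T0: "0 \<le> tilde_semi mu f" by (simp add: Delta3_def zero_ereal_def)
  have HT: "holder_semi mu f \<le> tilde_semi mu f"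
    unfolding holder_semi_def
  proof (rule SUP_least, clarify)
    fix s t u :: real assume "0 \<le> s" "s \<le> t" "t \<le> u" "u \<le> 1"
    thus "ereal (Delta3 f s t u / \<bar>u - s\<bar> powr mu) \<le> tilde_semi mu f"
      using holder_le_tilde_pt[of mu s t u f] assms(1) T0
      by (cases "s = u") (auto simp: Delta3_def zero_ereal_def)
  qed
  have "ereal (1/2) * tilde_semi mu f \<le> ereal (1/2) * ereal (2*H)"
    by (rule ereal_mult_left_mono[OF T]) simp
  also have "\<dots> = holder_semi mu f" using H by simp
  finally have c1: "ereal (1/2) * tilde_semi mu f \<le> holder_semi mu f" .
  obtain T' where T': "tilde_semi mu f = ereal T'" using T T0 by (cases "tilde_semi mu f") auto
  have "tilde_semi mu f \<le> 2 * tilde_semi mu f" using T' T0 by simp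
  with HT c1 show ?thesis by simp
qed

end
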